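(* Let $d\ge3$, $h\ge1$. Then $G(d,h)$ has a cyclic subgroup of order $(d-1)^h$.
   Context: Let $\mathcal{T}(d,h)$ be the rooted tree in which the root $0$ has $d$ children, every vertex at distance $1,\dots,h-1$ from the root has $d-1$ children, and the vertices at distance $h$ are leaves. Let $V$ be its vertex set, $A$ its adjacency matrix, $\Delta := dI-A$, and $\Lambda\subset\mathbb{Z}^V$ the lattice spanned by the rows of $\Delta$. Then $G(d,h):=\mathbb{Z}^V/\Lambda$. *)

theory Defs
  imports "HOL-Algebra.Algebra"
begin

text \<open>Vertices of T(d,h) are encoded as lists (paths from the root):
  the root is [], the children of the root are [i] with i < d, and the
  children of a non-root vertex xs at depth < h are xs @ [j] with j < d - 1.\<close>

definition tree_V :: "nat \<Rightarrow> nat \<Rightarrow> nat list set" where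
  "tree_V d h = {xs. length xs \<le> h \<and> (xs \<noteq> [] \<longrightarrow> hd xs < d)
                    \<and> (\<forall>i \<in> set (tl xs). i < d - 1)}"

definition tree_A :: "nat \<Rightarrow> nat \<Rightarrow> nat list \<Rightarrow> nat list \<Rightarrow> int" where
  "tree_A d h u v =
     (if u \<in> tree_V d h \<and> v \<in> tree_V d h \<and> ((\<exists>i. v = u @ [i]) \<or> (\<exists>i. u = v @ [i]))
      then 1 else 0)"

definition tree_Delta :: "nat \<Rightarrow> nat \<Rightarrow> nat list \<Rightarrow> nat list \<Rightarrow> int" where
  "tree_Delta d h u v =
     (if u \<in> tree_V d h \<and> v \<in> tree_V d h
      then (if u = v then int d else 0) - tree_A d h u v else 0)"

definition ZV_group :: "nat \<Rightarrow> nat \<Rightarrow> (nat list \<Rightarrow> int) monoid" where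
  "ZV_group d h = \<lparr>carrier = {f. \<forall>v. v \<notin> tree_V d h \<longrightarrow> f v = 0},
                   monoid.mult = (\<lambda>f g v. f v + g v),
                   one = (\<lambda>v. 0)\<rparr>"

definition tree_Lambda :: "nat \<Rightarrow> nat \<Rightarrow> (nat list \<Rightarrow> int) set" where
  "tree_Lambda d h = {(\<lambda>v. \<Sum>u\<in>tree_V d h. c u * tree_Delta d h u v) | c. True}"

definition sandpile_G :: "nat \<Rightarrow> nat \<Rightarrow> (nat list \<Rightarrow> int) set monoid" where
  "sandpile_G d h = ZV_group d h Mod tree_Lambda d h"

end

theory Submission
  imports Defs "HOL-Algebra.Multiplicative_Group"
begin


lemma tV_finite: "finite (tree_V d h)"
proof -
  have "tree_V d h \<subseteq> {xs. set xs \<subseteq> {..<d} \<and> length xs \<le> h}"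
  proof
    fix xs assume a: "xs \<in> tree_V d h"
    show "xs \<in> {xs. set xs \<subseteq> {..<d} \<and> length xs \<le> h}"
    proof (cases xs)
      case Nil then show ?thesis using a by (auto simp: tree_V_def)
    next
      case (Cons y ys) then show ?thesis using a by (fastforce simp: tree_V_def)
    qed
  qed
  moreover have "finite {xs. set xs \<subseteq> {..<d} \<and> length xs \<le> h}"
    by (rule finite_lists_length_le) simp
  ultimately show ?thesis by (rule finite_subset)
qed

lemma tV_nil: "[] \<in> tree_V d h" by (simp add: tree_V_def)

lemma tV_butlast: assumes "v \<in> tree_V d h" "v \<noteq> []" shows "butlast v \<in> tree_V d h"
proof -
  obtain y ys where v: "v = y # ys" using assms(2) by (cases v) auto
  show ?thesis using assms(1) unfolding v tree_V_def
    by (cases ys rule: rev_cases) auto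
qed

definition bnd :: "nat \<Rightarrow> nat list \<Rightarrow> nat" where
  "bnd d v = (if v = [] then d else d - 1)"

lemma tV_snoc: assumes "v \<in> tree_V d h"
  shows "v @ [i] \<in> tree_V d h \<longleftrightarrow> length v < h \<and> i < bnd d v"
  using assms by (cases v) (auto simp: tree_V_def bnd_def)

lemma children_set: assumes "v \<in> tree_V d h"
  shows "tree_V d h \<inter> {u. \<exists>i. u = v @ [i]} =
     (if length v < h then (\<lambda>i. v @ [i]) ` {..<bnd d v} else {})"
  using tV_snoc[OF assms] by auto

lemma parent_set: assumes "v \<in> tree_V d h"
  shows "tree_V d h \<inter> {u. \<exists>i. v = u @ [i]} = (if v = [] then {} else {butlast v})"
proof (cases "v = []")
  case True then show ?thesis by auto
next
  case False
  then obtain u i where v: "v = u @ [i]" by (metis append_butlast_last_id)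
  have "butlast v \<in> tree_V d h" using tV_butlast[OF assms False] .
  then show ?thesis using False v by auto
qed

lemma Delta_sym: "tree_Delta d h u v = tree_Delta d h v u"
  unfolding tree_Delta_def tree_A_def by auto

lemma Delta_out: "v \<notin> tree_V d h \<Longrightarrow> tree_Delta d h u v = 0"
  unfolding tree_Delta_def by auto

lemma sum_Delta:
  assumes v: "v \<in> tree_V d h"
  shows "(\<Sum>u\<in>tree_V d h. f u * tree_Delta d h u v) =
     int d * f v - (\<Sum>u\<in>(if v = [] then {} else {butlast v}). f u)
       - (\<Sum>u\<in>(if length v < h then (\<lambda>i. v @ [i]) ` {..<bnd d v} else {}). f u)"
proof -
  let ?V = "tree_V d h"
  let ?C = "{u. \<exists>i. u = v @ [i]}" and ?P = "{u. \<exists>i. v = u @ [i]}"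
  have fin: "finite ?V" by (rule tV_finite)
  have "(\<Sum>u\<in>?V. f u * tree_Delta d h u v) =
     (\<Sum>u\<in>?V. (if u = v then int d * f u else 0)) - (\<Sum>u\<in>?V. (if u \<in> ?P \<union> ?C then f u else 0))"
    unfolding sum_subtractf[symmetric]
    by (rule sum.cong) (use v in \<open>auto simp: tree_Delta_def tree_A_def\<close>)
  also have "(\<Sum>u\<in>?V. (if u = v then int d * f u else 0)) = int d * f v"
    using fin v by (simp add: sum.delta)
  also have "(\<Sum>u\<in>?V. (if u \<in> ?P \<union> ?C then f u else 0)) = (\<Sum>u\<in>?V \<inter> (?P \<union> ?C). f u)"
    using fin by (simp add: sum.inter_restrict)
  also have "?V \<inter> (?P \<union> ?C) = (?V \<inter> ?P) \<union> (?V \<inter> ?C)" by blast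
  also have "(\<Sum>u\<in>(?V \<inter> ?P) \<union> (?V \<inter> ?C). f u) = (\<Sum>u\<in>?V \<inter> ?P. f u) + (\<Sum>u\<in>?V \<inter> ?C. f u)"
    by (rule sum.union_disjoint) (use fin in auto)
  finally show ?thesis unfolding children_set[OF v] parent_set[OF v] by simp
qed

definition Wt :: "nat \<Rightarrow> nat \<Rightarrow> nat \<Rightarrow> int" where
  "Wt d h k = 1 - (int d - 1) ^ (h + 1 - k)"

lemma sum_children: "(\<Sum>u\<in>(\<lambda>i. v @ [i]) ` {..<b}. Wt d h (length u)) = int b * Wt d h (Suc (length v))"
proof -
  have "inj_on (\<lambda>i. v @ [i]) {..<b}" by (auto simp: inj_on_def)
  then show ?thesis by (simp add: sum.reindex)
qed

lemma sum_W_Delta: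
  assumes v: "v \<in> tree_V d h" and d: "d \<ge> 2" and h: "h \<ge> 1"
  shows "(\<Sum>u\<in>tree_V d h. Wt d h (length u) * tree_Delta d h u v) =
     (if v = [] then - (int d * (int d - 2) * (int d - 1) ^ h) else 0)"
proof -
  let ?q = "int d - 1"
  have lv: "length v \<le> h" using v by (simp add: tree_V_def)
  show ?thesis
  proof (cases "v = []")
    case True
    have W0: "Wt d h 0 = 1 + ?q ^ h - int d * ?q ^ h" and W1: "Wt d h (Suc 0) = 1 - ?q ^ h"
      using h by (simp_all add: Wt_def algebra_simps)
    have "(\<Sum>u\<in>(\<lambda>i. [i]) ` {..<d}. Wt d h (length u)) = int d * Wt d h 1"
      using sum_children[where v="[]" and b=d and d=d and h=h] by simp
    then show ?thesis
      unfolding sum_Delta[OF v] using True h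
      by (simp add: bnd_def W0 W1 algebra_simps)
  next
    case False
    then obtain k where k: "length v = Suc k" by (cases v) auto
    have bl: "length (butlast v) = k" using k by simp
    have dd: "int (d - Suc 0) = ?q" using d by simp
    show ?thesis
    proof (cases "Suc k < h")
      case True
      obtain m where m: "h - Suc k = Suc m" using True by (metis Suc_diff_Suc)
      have x1: "h + 1 - Suc k = Suc (Suc m)" "h + 1 - k = Suc (Suc (Suc m))" "h + 1 - Suc (Suc k) = Suc m"
        using m True by arith+
      have e1: "Wt d h (Suc k) = 1 - ?q ^ Suc (Suc m)" unfolding Wt_def using x1 by metis
      have e2: "Wt d h k = 1 - ?q ^ Suc (Suc (Suc m))" unfolding Wt_def using x1 by metis
      have e3: "Wt d h (Suc (Suc k)) = 1 - ?q ^ Suc m" unfolding Wt_def using x1 by metis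
      show ?thesis unfolding sum_Delta[OF v] using False True k
        by (simp add: sum_children bnd_def bl e1 e2 e3 dd algebra_simps)
    next
      case False2: False
      have hk: "h = Suc k" using False2 lv k by simp
      have e1: "Wt d h (Suc k) = 1 - ?q" unfolding Wt_def using hk by simp
      have e2: "Wt d h k = 1 - ?q ^ 2" unfolding Wt_def using hk by simp
      show ?thesis unfolding sum_Delta[OF v] using False False2 k
        by (simp add: bl e1 e2 power2_eq_square algebra_simps)
    qed
  qed
qed



definition Ev :: "nat \<Rightarrow> nat list \<Rightarrow> int" where
  "Ev d v = (if v = [] then int d * (int d - 2) else 0)"

lemma lam_N:
  assumes d: "d \<ge> 2" and h: "h \<ge> 1"
  shows "(\<lambda>v. int ((d - 1) ^ h) * Ev d v) \<in> tree_Lambda d h"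
proof -
  have "(\<lambda>v. int ((d - 1) ^ h) * Ev d v) = (\<lambda>v. \<Sum>u\<in>tree_V d h. (- Wt d h (length u)) * tree_Delta d h u v)"
  proof
    fix v
    show "int ((d - 1) ^ h) * Ev d v = (\<Sum>u\<in>tree_V d h. (- Wt d h (length u)) * tree_Delta d h u v)"
    proof (cases "v \<in> tree_V d h")
      case True
      have "(\<Sum>u\<in>tree_V d h. (- Wt d h (length u)) * tree_Delta d h u v)
          = - (\<Sum>u\<in>tree_V d h. Wt d h (length u) * tree_Delta d h u v)"
        by (simp add: sum_negf[symmetric])
      also have "\<dots> = - (if v = [] then - (int d * (int d - 2) * (int d - 1) ^ h) else 0)"
        using sum_W_Delta[OF True d h] by simp
      finally have r: "(\<Sum>u\<in>tree_V d h. (- Wt d h (length u)) * tree_Delta d h u v) = - (if v = [] then - (int d * (int d - 2) * (int d - 1) ^ h) else 0)" .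
      have n: "int ((d - 1) ^ h) = (int d - 1) ^ h" using d by (simp add: of_nat_diff)
      show ?thesis unfolding r n by (simp add: Ev_def)
    next
      case False
      then have "v \<noteq> []" using tV_nil by auto
      moreover have "\<And>u. tree_Delta d h u v = 0" using Delta_out[OF False] .
      ultimately show ?thesis by (simp only: Ev_def if_False mult_zero_right sum.neutral_const)
    qed
  qed
  then show ?thesis unfolding tree_Lambda_def
    by (intro CollectI exI[of _ "\<lambda>u. - Wt d h (length u)"]) simp
qed


lemma lam_dvd:
  assumes d: "d \<ge> 3" and h: "h \<ge> 1"
    and mem: "(\<lambda>v. int k * Ev d v) \<in> tree_Lambda d h"
  shows "(d - 1) ^ h dvd k"
proof -
  let ?V = "tree_V d h" and ?q = "int d - 1"
  let ?X = "int d * (int d - 2)"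
  obtain c where c0: "(\<lambda>v. int k * Ev d v) = (\<lambda>v. \<Sum>u\<in>?V. c u * tree_Delta d h u v)"
    using mem unfolding tree_Lambda_def by (auto simp only: mem_Collect_eq)
  have c: "\<And>v. int k * Ev d v = (\<Sum>u\<in>?V. c u * tree_Delta d h u v)"
    using fun_cong[OF c0] .
  have fin: "finite ?V" by (rule tV_finite)
  have "(\<Sum>v\<in>?V. Wt d h (length v) * (int k * Ev d v)) = (\<Sum>v\<in>?V. (if v = [] then Wt d h 0 * int k * ?X else 0))"
    by (rule sum.cong) (auto simp: Ev_def)
  also have "\<dots> = Wt d h 0 * int k * ?X" using fin tV_nil by (simp add: sum.delta)
  finally have l: "(\<Sum>v\<in>?V. Wt d h (length v) * (int k * Ev d v)) = Wt d h 0 * int k * ?X" .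
  have "(\<Sum>v\<in>?V. Wt d h (length v) * (int k * Ev d v)) = (\<Sum>v\<in>?V. \<Sum>u\<in>?V. c u * (Wt d h (length v) * tree_Delta d h v u))"
    unfolding c sum_distrib_left
  proof (rule sum.cong[OF refl], rule sum.cong[OF refl])
    fix v u show "Wt d h (length v) * (c u * tree_Delta d h u v) = c u * (Wt d h (length v) * tree_Delta d h v u)"
      using Delta_sym[of d h u v] by simp
  qed
  also have "\<dots> = (\<Sum>u\<in>?V. c u * (\<Sum>v\<in>?V. Wt d h (length v) * tree_Delta d h v u))"
    by (subst sum.swap) (simp add: sum_distrib_left)
  also have "\<dots> = (\<Sum>u\<in>?V. (if u = [] then - c u * ?X * ?q ^ h else 0))"
  proof (rule sum.cong[OF refl])
    fix u assume u: "u \<in> ?V"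
    have d2: "d \<ge> 2" using d by simp
    show "c u * (\<Sum>v\<in>?V. Wt d h (length v) * tree_Delta d h v u) = (if u = [] then - c u * ?X * ?q ^ h else 0)"
      unfolding sum_W_Delta[OF u d2 h] by simp
  qed
  also have "\<dots> = - c [] * ?X * ?q ^ h" using fin tV_nil by (simp add: sum.delta)
  finally have "Wt d h 0 * int k * ?X = - c [] * ?X * ?q ^ h" using l by simp
  then have e0: "(Wt d h 0 * int k) * ?X = (- c [] * ?q ^ h) * ?X" by (simp only: ac_simps)
  have X: "?X \<noteq> 0" using d by simp
  have e: "Wt d h 0 * int k = - c [] * ?q ^ h" using e0 mult_right_cancel[OF X] by blast
  have "Wt d h 0 = 1 - ?q * ?q ^ h" by (simp add: Wt_def)
  with e have "int k = ?q ^ h * (int k * ?q - c [])" by (simp add: algebra_simps)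
  then have "?q ^ h dvd int k" by (metis dvd_triv_left)
  moreover have "?q ^ h = int ((d - 1) ^ h)" using d by (simp add: of_nat_diff)
  ultimately show ?thesis by (metis of_nat_dvd_iff)
qed



lemma ZV_carrier: "f \<in> carrier (ZV_group d h) \<longleftrightarrow> (\<forall>v. v \<notin> tree_V d h \<longrightarrow> f v = 0)"
  by (simp add: ZV_group_def)

lemma ZV_mult: "f \<otimes>\<^bsub>ZV_group d h\<^esub> g = (\<lambda>v. f v + g v)"
  by (simp add: ZV_group_def)

lemma ZV_one: "\<one>\<^bsub>ZV_group d h\<^esub> = (\<lambda>v. 0)"
  by (simp add: ZV_group_def)

lemma ZV_comm: "comm_group (ZV_group d h)"
proof (rule comm_groupI)
  fix x assume x: "x \<in> carrier (ZV_group d h)"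
  show "\<exists>y \<in> carrier (ZV_group d h). y \<otimes>\<^bsub>ZV_group d h\<^esub> x = \<one>\<^bsub>ZV_group d h\<^esub>"
    by (rule bexI[of _ "\<lambda>v. - x v"]) (use x in \<open>auto simp: ZV_group_def\<close>)
qed (auto simp: ZV_group_def)

lemma ZV_group: "group (ZV_group d h)"
  using ZV_comm comm_group.axioms(2) by blast

lemma ZV_inv: assumes "f \<in> carrier (ZV_group d h)"
  shows "inv\<^bsub>ZV_group d h\<^esub> f = (\<lambda>v. - f v)"
  by (rule group.inv_equality[OF ZV_group]) (use assms in \<open>auto simp: ZV_group_def\<close>)

lemma Lam_sub: "subgroup (tree_Lambda d h) (ZV_group d h)"
proof (rule group.subgroupI[OF ZV_group])
  show "tree_Lambda d h \<subseteq> carrier (ZV_group d h)"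
    unfolding tree_Lambda_def ZV_group_def by (auto simp: Delta_out)
  show "tree_Lambda d h \<noteq> {}"
    unfolding tree_Lambda_def by auto
next
  fix a assume "a \<in> tree_Lambda d h"
  then obtain c where a: "a = (\<lambda>v. \<Sum>u\<in>tree_V d h. c u * tree_Delta d h u v)"
    unfolding tree_Lambda_def by (auto simp only: mem_Collect_eq)
  have ac: "a \<in> carrier (ZV_group d h)" unfolding a ZV_group_def by (auto simp: Delta_out)
  have "inv\<^bsub>ZV_group d h\<^esub> a = (\<lambda>v. \<Sum>u\<in>tree_V d h. (- c u) * tree_Delta d h u v)"
    unfolding ZV_inv[OF ac] by (simp add: a sum_negf)
  then show "inv\<^bsub>ZV_group d h\<^esub> a \<in> tree_Lambda d h"
    unfolding tree_Lambda_def by (intro CollectI exI[of _ "\<lambda>u. - c u"]) simp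
next
  fix a b assume "a \<in> tree_Lambda d h" "b \<in> tree_Lambda d h"
  then obtain c c' where a: "a = (\<lambda>v. \<Sum>u\<in>tree_V d h. c u * tree_Delta d h u v)"
     and b: "b = (\<lambda>v. \<Sum>u\<in>tree_V d h. c' u * tree_Delta d h u v)"
    unfolding tree_Lambda_def by (auto simp only: mem_Collect_eq)
  have "a \<otimes>\<^bsub>ZV_group d h\<^esub> b = (\<lambda>v. \<Sum>u\<in>tree_V d h. (c u + c' u) * tree_Delta d h u v)"
    unfolding ZV_mult a b by (simp add: sum.distrib distrib_right)
  then show "a \<otimes>\<^bsub>ZV_group d h\<^esub> b \<in> tree_Lambda d h"
    unfolding tree_Lambda_def by (intro CollectI exI[of _ "\<lambda>u. c u + c' u"]) simp
qed

lemma Lam_normal: "tree_Lambda d h \<lhd> ZV_group d h"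
  using comm_group.subgroup_imp_normal[OF ZV_comm Lam_sub] .

lemma G_group: "group (sandpile_G d h)"
  unfolding sandpile_G_def using normal.factorgroup_is_group[OF Lam_normal] .

lemma Ev_carrier: "Ev d \<in> carrier (ZV_group d h)"
  unfolding ZV_group_def Ev_def using tV_nil by auto

lemma nEv_carrier: "(\<lambda>v. int n * Ev d v) \<in> carrier (ZV_group d h)"
  unfolding ZV_group_def Ev_def using tV_nil by auto

lemma G_pow:
  "(tree_Lambda d h #>\<^bsub>ZV_group d h\<^esub> Ev d) [^]\<^bsub>sandpile_G d h\<^esub> n
     = tree_Lambda d h #>\<^bsub>ZV_group d h\<^esub> (\<lambda>v. int n * Ev d v)"
proof (induction n)
  case 0
  have "(\<lambda>v. int 0 * Ev d v) = \<one>\<^bsub>ZV_group d h\<^esub>" by (simp add: ZV_one)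
  moreover have "tree_Lambda d h \<subseteq> carrier (ZV_group d h)"
    using Lam_sub subgroup.subset by blast
  ultimately show ?case
    by (simp add: sandpile_G_def FactGroup_def group.coset_mult_one[OF ZV_group])
next
  case (Suc n)
  have "(tree_Lambda d h #>\<^bsub>ZV_group d h\<^esub> Ev d) [^]\<^bsub>sandpile_G d h\<^esub> Suc n
     = (tree_Lambda d h #>\<^bsub>ZV_group d h\<^esub> (\<lambda>v. int n * Ev d v)) <#>\<^bsub>ZV_group d h\<^esub>
       (tree_Lambda d h #>\<^bsub>ZV_group d h\<^esub> Ev d)"
    using Suc by (simp add: sandpile_G_def FactGroup_def)
  also have "\<dots> = tree_Lambda d h #>\<^bsub>ZV_group d h\<^esub> ((\<lambda>v. int n * Ev d v) \<otimes>\<^bsub>ZV_group d h\<^esub> Ev d)"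
    by (rule normal.rcos_sum[OF Lam_normal nEv_carrier Ev_carrier])
  also have "(\<lambda>v. int n * Ev d v) \<otimes>\<^bsub>ZV_group d h\<^esub> Ev d = (\<lambda>v. int (Suc n) * Ev d v)"
    by (simp add: ZV_mult algebra_simps)
  finally show ?case .
qed

lemma rcos_eq_iff:
  assumes "f \<in> carrier (ZV_group d h)"
  shows "tree_Lambda d h #>\<^bsub>ZV_group d h\<^esub> f = tree_Lambda d h \<longleftrightarrow> f \<in> tree_Lambda d h"
  using subgroup.rcos_const[OF Lam_sub ZV_group] group.rcos_self[OF ZV_group assms Lam_sub]
  by auto

theorem lemma8p18:
  fixes d h :: nat
  assumes "d \<ge> 3" and "h \<ge> 1"
  shows "\<exists>H. subgroup H (sandpile_G d h)
            \<and> (\<exists>g \<in> carrier (sandpile_G d h). H = generate (sandpile_G d h) {g})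
            \<and> finite H \<and> card H = (d - 1) ^ h"
proof -
  let ?G = "sandpile_G d h" and ?Z = "ZV_group d h" and ?L = "tree_Lambda d h"
  let ?g = "?L #>\<^bsub>?Z\<^esub> Ev d"
  let ?N = "(d - 1) ^ h"
  interpret G: group ?G by (rule G_group)
  have gc: "?g \<in> carrier ?G"
    unfolding sandpile_G_def FactGroup_def using Ev_carrier by (auto simp: RCOSETS_def)
  have one: "\<one>\<^bsub>?G\<^esub> = ?L" by (simp add: sandpile_G_def FactGroup_def)
  have pw: "?g [^]\<^bsub>?G\<^esub> n = \<one>\<^bsub>?G\<^esub> \<longleftrightarrow> (\<lambda>v. int n * Ev d v) \<in> ?L" for n :: nat
      unfolding G_pow one by (rule rcos_eq_iff[OF nEv_carrier])
  have gN: "?g [^]\<^bsub>?G\<^esub> ?N = \<one>\<^bsub>?G\<^esub>"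
    unfolding pw using lam_N[of d h] assms by simp
  have "\<forall>n::nat. ?g [^]\<^bsub>?G\<^esub> n = \<one>\<^bsub>?G\<^esub> \<longleftrightarrow> ?N dvd n"
  proof (intro allI iffI)
    fix n :: nat assume "?g [^]\<^bsub>?G\<^esub> n = \<one>\<^bsub>?G\<^esub>"
    then show "?N dvd n" using lam_dvd[OF assms, of n] pw by blast
  next
    fix n :: nat assume "?N dvd n"
    then obtain m where n: "n = ?N * m" by blast
    show "?g [^]\<^bsub>?G\<^esub> n = \<one>\<^bsub>?G\<^esub>"
      unfolding n G.nat_pow_pow[OF gc, symmetric] gN by simp
  qed
  then have ord: "G.ord ?g = ?N" using G.ord_unique[OF gc] by blast
  have card: "card (generate ?G {?g}) = ?N" using G.generate_pow_card[OF gc] ord by simp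
  have "?N > 0" using assms by simp
  then have "finite (generate ?G {?g})" using card card_ge_0_finite by metis
  moreover have "subgroup (generate ?G {?g}) ?G" using G.generate_is_subgroup gc by blast
  ultimately show ?thesis using card gc by blast
qed

end
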